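(* In the setting below, if the multigraph $\alpha$ is connected, $1\in V(\alpha)$, and $1\le|\alpha|\le\log_2(1/\rho)-1$, then \[ \tfrac12\lambda^{|\alpha|}\rho^{|V(\alpha)|}\le\kappa_\alpha\le\lambda^{|\alpha|}\rho^{|V(\alpha)|}. \]
   Context: Let $n\ge1$, $\lambda\ge0$, $\rho\in(0,1)$, $v\in\{0,1\}^n$ with i.i.d. $\mathrm{Bernoulli}(\rho)$ entries, $N=n(n+1)/2$ indexed by pairs $(i,j)$ with $1\le i\le j\le n$, $X_{ij}=\lambda v_iv_j$, and $x=v_1$. An index $\alpha=(\alpha_{ij})_{i\le j}\in\mathbb{N}^N$ is viewed as a multigraph on vertex set $[n]$ (self-loops allowed) with $\alpha_{ij}$ edges between $i$ and $j$; $|\alpha|$ is its number of edges and $V(\alpha)$ the set of vertices spanned by its edges. $\kappa_\alpha$ is defined recursively by $\kappa_\alpha=\mathbb{E}[xX^\alpha]-\sum_{0\le\beta\lneq\alpha}\kappa_\beta\binom{\alpha}{\beta}\mathbb{E}[X^{\alpha-\beta}]$, with multi-index notation $X^\alpha=\prod X_{ij}^{\alpha_{ij}}$, $\binom{\alpha}{\beta}=\prod\binom{\alpha_{ij}}{\beta_{ij}}$, $\beta\le\alpha$ entrywise, $\beta\lneq\alpha$ meaning $\beta\le\alpha$, $\beta\ne\alpha$. *)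

theory Defs
  imports Complex_Main "HOL-Library.Multiset" "HOL-Library.FuncSet"
begin

text \<open>A multi-index alpha in N^N (N = n(n+1)/2 pairs (i,j), i <= j) is represented as a
  multiset of pairs: count alpha (i,j) = alpha_ij.  Multi-indices are required to be
  supported on the index set below.\<close>

definition idx_pairs :: "nat \<Rightarrow> (nat \<times> nat) set" where
  "idx_pairs n = {(i, j). 1 \<le> i \<and> i \<le> j \<and> j \<le> n}"

definition verts :: "(nat \<times> nat) multiset \<Rightarrow> nat set" where
  "verts \<alpha> = fst ` set_mset \<alpha> \<union> snd ` set_mset \<alpha>"

definition adj :: "(nat \<times> nat) multiset \<Rightarrow> (nat \<times> nat) set" where
  "adj \<alpha> = {(i, j). (i, j) \<in># \<alpha> \<or> (j, i) \<in># \<alpha>}"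

definition mg_connected :: "(nat \<times> nat) multiset \<Rightarrow> bool" where
  "mg_connected \<alpha> \<longleftrightarrow> (\<forall>u\<in>verts \<alpha>. \<forall>w\<in>verts \<alpha>. (u, w) \<in> (adj \<alpha>)\<^sup>*)"

definition Xpow :: "real \<Rightarrow> (nat \<Rightarrow> real) \<Rightarrow> (nat \<times> nat) multiset \<Rightarrow> real" where
  "Xpow lam v \<alpha> = (\<Prod>p\<in>set_mset \<alpha>. (lam * v (fst p) * v (snd p)) ^ count \<alpha> p)"

definition mbinom :: "(nat \<times> nat) multiset \<Rightarrow> (nat \<times> nat) multiset \<Rightarrow> nat" where
  "mbinom \<alpha> \<beta> = (\<Prod>p\<in>set_mset \<alpha>. count \<alpha> p choose count \<beta> p)"

definition Ev :: "nat \<Rightarrow> real \<Rightarrow> ((nat \<Rightarrow> real) \<Rightarrow> real) \<Rightarrow> real" where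
  "Ev n \<rho> f = (\<Sum>v\<in>PiE {1..n} (\<lambda>_. {0, 1}).
      (\<Prod>i\<in>{1..n}. if v i = 1 then \<rho> else 1 - \<rho>) * f v)"

function kappa :: "nat \<Rightarrow> real \<Rightarrow> real \<Rightarrow> (nat \<times> nat) multiset \<Rightarrow> real" where
  "kappa n lam \<rho> \<alpha> =
     Ev n \<rho> (\<lambda>v. v 1 * Xpow lam v \<alpha>)
     - (\<Sum>\<beta>\<in>{\<beta>. \<beta> \<subset># \<alpha>}.
          kappa n lam \<rho> \<beta> * real (mbinom \<alpha> \<beta>) * Ev n \<rho> (\<lambda>v. Xpow lam v (\<alpha> - \<beta>)))"
  by pat_completeness auto
termination
  by (relation "measure (\<lambda>(n, lam, \<rho>, \<alpha>). size \<alpha>)") (auto simp: mset_subset_size)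

end

theory Submission imports Defs begin


declare kappa.simps[simp del]

definition ind :: "(nat \<Rightarrow> real) \<Rightarrow> nat set \<Rightarrow> real" where
  "ind v S = (if \<forall>i\<in>S. v i = 1 then 1 else 0)"

lemma PiE_bin: "v \<in> PiE {1..n} (\<lambda>_. {0::real, 1}) \<Longrightarrow> i \<in> {1..n} \<Longrightarrow> v i = 0 \<or> v i = 1"
  by (auto simp: PiE_def Pi_def)

lemma ind_prod:
  assumes "S \<subseteq> {1..n}" "v \<in> PiE {1..n} (\<lambda>_. {0::real, 1})"
  shows "ind v S = (\<Prod>i\<in>{1..n}. if i \<in> S then v i else 1)"
proof (cases "\<forall>i\<in>S. v i = 1")
  case True
  then show ?thesis by (auto simp: ind_def intro!: prod.neutral)
next
  case False
  then obtain i where i: "i \<in> S" "v i \<noteq> 1" by auto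
  then have "v i = 0" using PiE_bin[OF assms(2)] assms(1) by blast
  then have "(\<Prod>i\<in>{1..n}. if i \<in> S then v i else 1) = 0"
    using i assms(1) by (subst prod_zero_iff) auto
  then show ?thesis using False unfolding ind_def by presburger
qed

lemma Ev_cong:
  "(\<And>v. v \<in> PiE {1..n} (\<lambda>_. {0::real, 1}) \<Longrightarrow> f v = g v) \<Longrightarrow> Ev n \<rho> f = Ev n \<rho> g"
  unfolding Ev_def by (rule sum.cong) auto

lemma Ev_scale: "Ev n \<rho> (\<lambda>v. c * f v) = c * Ev n \<rho> f"
  unfolding Ev_def by (simp add: sum_distrib_left algebra_simps)

lemma Ev_ind:
  assumes "S \<subseteq> {1..n}"
  shows "Ev n \<rho> (\<lambda>v. ind v S) = \<rho> ^ card S"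
proof -
  define h where "h i b = (if b = (1::real) then \<rho> else 1 - \<rho>) * (if i \<in> S then b else 1)" for i b
  have "Ev n \<rho> (\<lambda>v. ind v S) = (\<Sum>v\<in>PiE {1..n} (\<lambda>_. {0::real, 1}). \<Prod>i\<in>{1..n}. h i (v i))"
    unfolding Ev_def h_def
    by (rule sum.cong[OF refl]) (simp add: ind_prod[OF assms] prod.distrib)
  also have "\<dots> = (\<Prod>i\<in>{1..n}. \<Sum>b\<in>{0::real,1}. h i b)"
    by (rule prod_sum_PiE[symmetric]) auto
  also have "\<dots> = (\<Prod>i\<in>{1..n}. if i \<in> S then \<rho> else 1)"
    by (rule prod.cong) (auto simp: h_def)
  also have "\<dots> = \<rho> ^ card ({1..n} \<inter> S)"
    by (simp add: prod.If_cases)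
  also have "{1..n} \<inter> S = S" using assms by auto
  finally show ?thesis .
qed


lemma verts_sub: "set_mset \<beta> \<subseteq> idx_pairs n \<Longrightarrow> verts \<beta> \<subseteq> {1..n}"
  by (auto simp: verts_def idx_pairs_def)

lemma size_eq_sum: "size M = (\<Sum>p\<in>set_mset M. count M p)"
  by (simp add: size_multiset_overloaded_eq)

lemma Xpow_bin:
  assumes "set_mset \<beta> \<subseteq> idx_pairs n" "v \<in> PiE {1..n} (\<lambda>_. {0::real, 1})"
  shows "Xpow lam v \<beta> = lam ^ size \<beta> * ind v (verts \<beta>)"
proof -
  have bin: "\<And>i. i \<in> verts \<beta> \<Longrightarrow> v i = 0 \<or> v i = 1"
    using PiE_bin[OF assms(2)] verts_sub[OF assms(1)] by blast
  have "Xpow lam v \<beta> = (\<Prod>p\<in>set_mset \<beta>. lam ^ count \<beta> p) * (\<Prod>p\<in>set_mset \<beta>. (v (fst p) * v (snd p)) ^ count \<beta> p)"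
    unfolding Xpow_def by (simp add: prod.distrib[symmetric] power_mult_distrib mult.assoc)
  also have "(\<Prod>p\<in>set_mset \<beta>. lam ^ count \<beta> p) = lam ^ size \<beta>"
    by (simp add: size_eq_sum power_sum)
  also have "(\<Prod>p\<in>set_mset \<beta>. (v (fst p) * v (snd p)) ^ count \<beta> p) = ind v (verts \<beta>)"
  proof (cases "\<forall>i\<in>verts \<beta>. v i = 1")
    case True
    then have "\<And>p. p \<in> set_mset \<beta> \<Longrightarrow> v (fst p) = 1 \<and> v (snd p) = 1"
      by (auto simp: verts_def)
    then show ?thesis using True by (auto simp: ind_def intro!: prod.neutral)
  next
    case False
    then obtain i where i: "i \<in> verts \<beta>" "v i \<noteq> 1" by auto
    then have vi: "v i = 0" using bin by blast
    from i(1) obtain p where p: "p \<in> set_mset \<beta>" "i = fst p \<or> i = snd p"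
      by (auto simp: verts_def)
    then have "count \<beta> p > 0" by auto
    then have "(v (fst p) * v (snd p)) ^ count \<beta> p = 0" using p vi by auto
    then have "(\<Prod>p\<in>set_mset \<beta>. (v (fst p) * v (snd p)) ^ count \<beta> p) = 0"
      using p(1) by (subst prod_zero_iff) auto
    then show ?thesis using False unfolding ind_def by presburger
  qed
  finally show ?thesis .
qed

lemma ind_v1:
  assumes "1 \<le> n" "S \<subseteq> {1..n}" "v \<in> PiE {1..n} (\<lambda>_. {0::real, 1})"
  shows "v 1 * ind v S = ind v (S \<union> {1})"
proof -
  have "v 1 = 0 \<or> v 1 = 1" using PiE_bin[OF assms(3)] assms(1) by auto
  then show ?thesis by (auto simp: ind_def)
qed

definition FF :: "nat \<Rightarrow> real \<Rightarrow> real \<Rightarrow> (nat \<times> nat) multiset \<Rightarrow> real" where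
  "FF n lam \<rho> \<beta> = Ev n \<rho> (\<lambda>v. v 1 * Xpow lam v \<beta>)"
definition GG :: "nat \<Rightarrow> real \<Rightarrow> real \<Rightarrow> (nat \<times> nat) multiset \<Rightarrow> real" where
  "GG n lam \<rho> \<beta> = Ev n \<rho> (\<lambda>v. Xpow lam v \<beta>)"

lemma GG_eq:
  assumes "set_mset \<beta> \<subseteq> idx_pairs n"
  shows "GG n lam \<rho> \<beta> = lam ^ size \<beta> * \<rho> ^ card (verts \<beta>)"
proof -
  have "GG n lam \<rho> \<beta> = Ev n \<rho> (\<lambda>v. lam ^ size \<beta> * ind v (verts \<beta>))"
    unfolding GG_def by (rule Ev_cong) (simp add: Xpow_bin[OF assms])
  then show ?thesis by (simp add: Ev_scale Ev_ind[OF verts_sub[OF assms]])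
qed

lemma FF_eq:
  assumes "1 \<le> n" "set_mset \<beta> \<subseteq> idx_pairs n"
  shows "FF n lam \<rho> \<beta> = lam ^ size \<beta> * \<rho> ^ card (verts \<beta> \<union> {1})"
proof -
  have "FF n lam \<rho> \<beta> = Ev n \<rho> (\<lambda>v. lam ^ size \<beta> * ind v (verts \<beta> \<union> {1}))"
    unfolding FF_def proof (rule Ev_cong)
    fix v assume v: "v \<in> PiE {1..n} (\<lambda>_. {0::real, 1})"
    show "v 1 * Xpow lam v \<beta> = lam ^ size \<beta> * ind v (verts \<beta> \<union> {1})"
      using ind_v1[OF assms(1) verts_sub[OF assms(2)] v] Xpow_bin[OF assms(2) v]
      by (metis mult.left_commute)
  qed
  then show ?thesis using verts_sub[OF assms(2)] assms(1) by (simp add: Ev_scale Ev_ind)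
qed

lemma kappa_eq: "kappa n lam \<rho> \<alpha> = FF n lam \<rho> \<alpha>
     - (\<Sum>\<beta>\<in>{\<beta>. \<beta> \<subset># \<alpha>}. kappa n lam \<rho> \<beta> * real (mbinom \<alpha> \<beta>) * GG n lam \<rho> (\<alpha> - \<beta>))"
  unfolding FF_def GG_def by (rule kappa.simps)


lemma bij_cnt:
  "bij_betw (\<lambda>\<beta>. restrict (count \<beta>) (set_mset \<alpha>)) {\<beta>. \<beta> \<subseteq># \<alpha>}
     (PiE (set_mset \<alpha>) (\<lambda>p. {0..count \<alpha> p}))"
proof (rule bij_betwI')
  fix x y assume x: "x \<in> {\<beta>. \<beta> \<subseteq># \<alpha>}" and y: "y \<in> {\<beta>. \<beta> \<subseteq># \<alpha>}"
  show "(restrict (count x) (set_mset \<alpha>) = restrict (count y) (set_mset \<alpha>)) = (x = y)"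
  proof
    assume h: "restrict (count x) (set_mset \<alpha>) = restrict (count y) (set_mset \<alpha>)"
    show "x = y"
    proof (rule multiset_eqI)
      fix p show "count x p = count y p"
      proof (cases "p \<in># \<alpha>")
        case True then show ?thesis using fun_cong[OF h, of p] by simp
      next
        case False
        then have "count \<alpha> p = 0" by (simp add: not_in_iff)
        then show ?thesis using x y by (metis mem_Collect_eq le_zero_eq mset_subset_eq_count)
      qed
    qed
  qed simp
next
  fix x assume "x \<in> {\<beta>. \<beta> \<subseteq># \<alpha>}"
  then show "restrict (count x) (set_mset \<alpha>) \<in> PiE (set_mset \<alpha>) (\<lambda>p. {0..count \<alpha> p})"
    by (auto simp: mset_subset_eq_count)
next
  fix g assume g: "g \<in> PiE (set_mset \<alpha>) (\<lambda>p. {0..count \<alpha> p})"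
  define f where "f q = (if q \<in># \<alpha> then g q else 0)" for q
  have fin: "finite {x. f x > 0}"
    by (rule finite_subset[of _ "set_mset \<alpha>"]) (auto simp: f_def split: if_splits)
  define \<beta> where "\<beta> = Abs_multiset f"
  have c: "count \<beta> = f" unfolding \<beta>_def using count_Abs_multiset[OF fin] .
  have "\<beta> \<subseteq># \<alpha>"
    unfolding subseteq_mset_def c f_def using g by (auto simp: PiE_def Pi_def)
  moreover have "g = restrict (count \<beta>) (set_mset \<alpha>)"
    using g unfolding c f_def by (auto simp: fun_eq_iff PiE_def extensional_def)
  ultimately show "\<exists>x\<in>{\<beta>. \<beta> \<subseteq># \<alpha>}. g = restrict (count x) (set_mset \<alpha>)" by blast
qed

lemma finite_submsets: "finite {\<beta>. \<beta> \<subseteq># (\<alpha>::'a multiset)}"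
  using bij_betw_finite[OF bij_cnt[of \<alpha>]] by (simp add: finite_PiE)

lemma finite_psubmsets: "finite {\<beta>. \<beta> \<subset># (\<alpha>::'a multiset)}"
  by (rule finite_subset[OF _ finite_submsets[of \<alpha>]]) auto

lemma mbinom_sum: "(\<Sum>\<beta>\<in>{\<beta>. \<beta> \<subseteq># \<alpha>}. real (mbinom \<alpha> \<beta>)) = 2 ^ size \<alpha>"
proof -
  have "(\<Sum>\<beta>\<in>{\<beta>. \<beta> \<subseteq># \<alpha>}. real (mbinom \<alpha> \<beta>))
     = (\<Sum>\<beta>\<in>{\<beta>. \<beta> \<subseteq># \<alpha>}. (\<lambda>g. \<Prod>p\<in>set_mset \<alpha>. real (count \<alpha> p choose g p)) (restrict (count \<beta>) (set_mset \<alpha>)))"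
    unfolding mbinom_def by (rule sum.cong) auto
  also have "\<dots> = (\<Sum>g\<in>PiE (set_mset \<alpha>) (\<lambda>p. {0..count \<alpha> p}). \<Prod>p\<in>set_mset \<alpha>. real (count \<alpha> p choose g p))"
    by (rule sum.reindex_bij_betw[OF bij_cnt])
  also have "\<dots> = (\<Prod>p\<in>set_mset \<alpha>. \<Sum>j\<in>{0..count \<alpha> p}. real (count \<alpha> p choose j))"
    by (rule prod_sum_PiE[symmetric]) auto
  also have "\<dots> = (\<Prod>p\<in>set_mset \<alpha>. 2 ^ count \<alpha> p)"
  proof (rule prod.cong[OF refl])
    fix p
    have "(\<Sum>j\<in>{0..count \<alpha> p}. real (count \<alpha> p choose j)) = real (\<Sum>j\<le>count \<alpha> p. count \<alpha> p choose j)"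
      by (simp add: atLeast0AtMost)
    also have "\<dots> = 2 ^ count \<alpha> p" by (simp add: choose_row_sum)
    finally show "(\<Sum>j\<in>{0..count \<alpha> p}. real (count \<alpha> p choose j)) = 2 ^ count \<alpha> p" .
  qed
  also have "\<dots> = 2 ^ size \<alpha>" by (simp add: size_eq_sum power_sum)
  finally show ?thesis .
qed

lemma mbinom_self: "mbinom \<alpha> \<alpha> = 1"
  by (simp add: mbinom_def)
lemma mbinom_empty: "mbinom \<alpha> {#} = 1"
  by (simp add: mbinom_def)

lemma mbinom_split:
  assumes "set_mset \<beta>1 \<inter> set_mset \<beta>2 = {}" "\<gamma> \<subseteq># \<beta>1"
  shows "mbinom (\<beta>1 + \<beta>2) \<gamma> = mbinom \<beta>1 \<gamma>"
proof -
  have "mbinom (\<beta>1 + \<beta>2) \<gamma> = (\<Prod>p\<in>set_mset \<beta>1 \<union> set_mset \<beta>2. count (\<beta>1+\<beta>2) p choose count \<gamma> p)"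
    by (simp add: mbinom_def)
  also have "\<dots> = (\<Prod>p\<in>set_mset \<beta>1. count (\<beta>1+\<beta>2) p choose count \<gamma> p) * (\<Prod>p\<in>set_mset \<beta>2. count (\<beta>1+\<beta>2) p choose count \<gamma> p)"
    by (rule prod.union_disjoint) (use assms in auto)
  also have "(\<Prod>p\<in>set_mset \<beta>2. count (\<beta>1+\<beta>2) p choose count \<gamma> p) = 1"
  proof (rule prod.neutral, rule ballI)
    fix p assume "p \<in># \<beta>2"
    then have "p \<notin># \<beta>1" using assms(1) by auto
    then have "count \<gamma> p = 0" using assms(2) by (meson mset_subset_eqD not_in_iff)
    then show "count (\<beta>1+\<beta>2) p choose count \<gamma> p = 1" by simp
  qed
  also have "(\<Prod>p\<in>set_mset \<beta>1. count (\<beta>1+\<beta>2) p choose count \<gamma> p) = mbinom \<beta>1 \<gamma>"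
    unfolding mbinom_def
  proof (rule prod.cong[OF refl])
    fix p assume "p \<in># \<beta>1"
    then have "p \<notin># \<beta>2" using assms(1) by auto
    then show "count (\<beta>1+\<beta>2) p choose count \<gamma> p = count \<beta>1 p choose count \<gamma> p"
      by (simp add: not_in_iff)
  qed
  finally show ?thesis by simp
qed


lemma sub_idx: "\<gamma> \<subseteq># \<beta> \<Longrightarrow> set_mset \<beta> \<subseteq> idx_pairs n \<Longrightarrow> set_mset \<gamma> \<subseteq> idx_pairs n"
  by (meson set_mset_mono subset_trans)

lemma sub_idx_diff: "set_mset \<beta> \<subseteq> idx_pairs n \<Longrightarrow> set_mset (\<beta> - \<gamma>) \<subseteq> idx_pairs n"
  by (meson in_diffD subset_iff)

lemma GG_empty: "GG n lam \<rho> {#} = 1"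
  by (subst GG_eq) (auto simp: verts_def)

lemma conv:
  assumes "set_mset \<beta> \<subseteq> idx_pairs n"
  shows "FF n lam \<rho> \<beta> = (\<Sum>\<gamma>\<in>{\<gamma>. \<gamma> \<subseteq># \<beta>}. kappa n lam \<rho> \<gamma> * real (mbinom \<beta> \<gamma>) * GG n lam \<rho> (\<beta> - \<gamma>))"
proof -
  have e: "{\<gamma>. \<gamma> \<subseteq># \<beta>} = insert \<beta> {\<gamma>. \<gamma> \<subset># \<beta>}" by auto
  show ?thesis
    unfolding e
    by (subst sum.insert) (auto simp: finite_psubmsets mbinom_self GG_empty kappa_eq[of n lam \<rho> \<beta>])
qed

lemma kappa_empty: "1 \<le> n \<Longrightarrow> kappa n lam \<rho> {#} = \<rho>"
  by (subst kappa_eq) (simp add: FF_eq verts_def)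

lemma verts_mono: "\<beta> \<subseteq># \<alpha> \<Longrightarrow> verts \<beta> \<subseteq> verts \<alpha>"
  unfolding verts_def using set_mset_mono by blast

lemma verts_plus: "verts (\<beta> + \<gamma>) = verts \<beta> \<union> verts \<gamma>"
  unfolding verts_def by auto

lemma verts_ne: "\<beta> \<noteq> {#} \<Longrightarrow> verts \<beta> \<noteq> {}"
  unfolding verts_def by auto

lemma conn_intersect:
  assumes "mg_connected \<alpha>" "\<beta> \<subseteq># \<alpha>" "\<beta> \<noteq> {#}" "\<alpha> - \<beta> \<noteq> {#}"
  shows "verts \<beta> \<inter> verts (\<alpha> - \<beta>) \<noteq> {}"
proof
  assume dis: "verts \<beta> \<inter> verts (\<alpha> - \<beta>) = {}"
  have a: "\<alpha> = \<beta> + (\<alpha> - \<beta>)" using assms(2) by simp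
  obtain u where u: "u \<in> verts \<beta>" using verts_ne[OF assms(3)] by auto
  obtain w where w: "w \<in> verts (\<alpha> - \<beta>)" using verts_ne[OF assms(4)] by auto
  have uw: "(u, w) \<in> (adj \<alpha>)\<^sup>*"
    using assms(1) u w verts_mono[OF assms(2)] verts_mono[of "\<alpha> - \<beta>" \<alpha>]
    unfolding mg_connected_def by auto
  have "w \<in> verts \<beta>"
    using uw
  proof (induction rule: rtrancl_induct)
    case base then show ?case using u .
  next
    case (step y z)
    from step(2) have "(y, z) \<in># \<alpha> \<or> (z, y) \<in># \<alpha>" by (simp add: adj_def)
    then have "(y, z) \<in># \<beta> \<or> (z, y) \<in># \<beta> \<or> (y, z) \<in># \<alpha> - \<beta> \<or> (z, y) \<in># \<alpha> - \<beta>"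
      by (metis a union_iff)
    moreover have "y \<notin> verts (\<alpha> - \<beta>)" using step(3) dis by auto
    ultimately show ?case by (force simp: verts_def)
  qed
  then show False using w dis by auto
qed

lemma adj_sym: "(adj \<beta>)\<inverse> = adj \<beta>"
  unfolding adj_def by auto

lemma split_exists:
  assumes "\<beta> \<noteq> {#}" "\<not> (mg_connected \<beta> \<and> 1 \<in> verts \<beta>)"
  shows "\<exists>\<beta>1 \<beta>2. \<beta> = \<beta>1 + \<beta>2 \<and> \<beta>2 \<noteq> {#} \<and> verts \<beta>2 \<inter> (verts \<beta>1 \<union> {1}) = {}"
proof -
  define S where "S = {w. (1, w) \<in> (adj \<beta>)\<^sup>*}"
  define \<beta>1 where "\<beta>1 = filter_mset (\<lambda>p. fst p \<in> S) \<beta>"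
  define \<beta>2 where "\<beta>2 = filter_mset (\<lambda>p. fst p \<notin> S) \<beta>"
  have sum: "\<beta> = \<beta>1 + \<beta>2" unfolding \<beta>1_def \<beta>2_def by (simp add: multiset_partition)
  have cl1: "snd p \<in> S" if "p \<in># \<beta>" "fst p \<in> S" for p
  proof -
    have "(fst p, snd p) \<in> adj \<beta>" using that(1) by (cases p) (auto simp: adj_def)
    then show ?thesis using that(2) unfolding S_def by (auto intro: rtrancl_into_rtrancl)
  qed
  have cl2: "fst p \<in> S" if "p \<in># \<beta>" "snd p \<in> S" for p
  proof -
    have "(snd p, fst p) \<in> adj \<beta>" using that(1) by (cases p) (auto simp: adj_def)
    then show ?thesis using that(2) unfolding S_def by (auto intro: rtrancl_into_rtrancl)
  qed
  have oneS: "1 \<in> S" unfolding S_def by simp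
  have v1: "verts \<beta>1 \<subseteq> S" using cl1 unfolding verts_def \<beta>1_def by auto
  have v2: "verts \<beta>2 \<inter> S = {}" using cl2 unfolding verts_def \<beta>2_def by auto
  have ne: "\<beta>2 \<noteq> {#}"
  proof
    assume e: "\<beta>2 = {#}"
    have allS: "fst p \<in> S" if "p \<in># \<beta>" for p
    proof (rule ccontr)
      assume "fst p \<notin> S"
      then have "p \<in># \<beta>2" using that unfolding \<beta>2_def by simp
      then show False using e by simp
    qed
    have vS: "verts \<beta> \<subseteq> S" using allS cl1 unfolding verts_def by auto
    obtain p where p: "p \<in># \<beta>" using assms(1) by blast
    have "1 \<in> verts \<beta>"
    proof -
      have "(1, fst p) \<in> (adj \<beta>)\<^sup>*" using allS[OF p] unfolding S_def by simp
      then show ?thesis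
      proof (cases rule: converse_rtranclE)
        case base then show ?thesis using p by (auto simp: verts_def)
      next
        case (step y)
        then show ?thesis by (force simp: adj_def verts_def)
      qed
    qed
    moreover have "mg_connected \<beta>"
      unfolding mg_connected_def
    proof (intro ballI)
      fix u w assume "u \<in> verts \<beta>" "w \<in> verts \<beta>"
      then have "(1, u) \<in> (adj \<beta>)\<^sup>*" "(1, w) \<in> (adj \<beta>)\<^sup>*" using vS unfolding S_def by auto
      then have "(u, 1) \<in> (adj \<beta>)\<^sup>*" "(1, w) \<in> (adj \<beta>)\<^sup>*"
        using rtrancl_converseI[of 1 u "adj \<beta>"] adj_sym[of \<beta>] by auto
      then show "(u, w) \<in> (adj \<beta>)\<^sup>*" by (rule rtrancl_trans)
    qed
    ultimately show False using assms(2) by blast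
  qed
  show ?thesis using sum ne v1 v2 oneS by blast
qed


lemma finite_verts: "finite (verts \<beta>)"
  unfolding verts_def by auto

lemma GG_mult:
  assumes "set_mset \<beta>1 \<subseteq> idx_pairs n" "set_mset \<beta>2 \<subseteq> idx_pairs n" "verts \<beta>1 \<inter> verts \<beta>2 = {}"
  shows "GG n lam \<rho> (\<beta>1 + \<beta>2) = GG n lam \<rho> \<beta>1 * GG n lam \<rho> \<beta>2"
proof -
  have "card (verts (\<beta>1 + \<beta>2)) = card (verts \<beta>1) + card (verts \<beta>2)"
    unfolding verts_plus using assms(3) by (simp add: card_Un_disjoint finite_verts)
  then show ?thesis using assms by (simp add: GG_eq power_add)
qed

lemma FF_mult:
  assumes "1 \<le> n" "set_mset \<beta>1 \<subseteq> idx_pairs n" "set_mset \<beta>2 \<subseteq> idx_pairs n" "verts \<beta>2 \<inter> (verts \<beta>1 \<union> {1}) = {}"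
  shows "FF n lam \<rho> (\<beta>1 + \<beta>2) = FF n lam \<rho> \<beta>1 * GG n lam \<rho> \<beta>2"
proof -
  have e: "verts (\<beta>1 + \<beta>2) \<union> {1} = (verts \<beta>1 \<union> {1}) \<union> verts \<beta>2" unfolding verts_plus by auto
  have "card (verts (\<beta>1 + \<beta>2) \<union> {1}) = card (verts \<beta>1 \<union> {1}) + card (verts \<beta>2)"
    unfolding e using assms(4) by (subst card_Un_disjoint) (auto simp: finite_verts)
  moreover have "set_mset (\<beta>1 + \<beta>2) \<subseteq> idx_pairs n" using assms by auto
  ultimately show ?thesis using assms by (simp add: GG_eq FF_eq power_add)
qed

lemma vanish:
  assumes "1 \<le> n" "set_mset \<beta>1 \<subseteq> idx_pairs n" "set_mset \<beta>2 \<subseteq> idx_pairs n" "\<beta>2 \<noteq> {#}"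
    "verts \<beta>2 \<inter> (verts \<beta>1 \<union> {1}) = {}"
  shows "kappa n lam \<rho> (\<beta>1 + \<beta>2) = 0"
  using assms(2-)
proof (induction "size (\<beta>1 + \<beta>2)" arbitrary: \<beta>1 \<beta>2 rule: less_induct)
  case less
  define \<beta> where "\<beta> = \<beta>1 + \<beta>2"
  define T where "T \<gamma> = kappa n lam \<rho> \<gamma> * real (mbinom \<beta> \<gamma>) * GG n lam \<rho> (\<beta> - \<gamma>)" for \<gamma>
  have idx: "set_mset \<beta> \<subseteq> idx_pairs n" using less.prems unfolding \<beta>_def by auto
  have disj: "set_mset \<beta>1 \<inter> set_mset \<beta>2 = {}"
  proof (rule ccontr)
    assume "set_mset \<beta>1 \<inter> set_mset \<beta>2 \<noteq> {}"
    then obtain p where "p \<in># \<beta>1" "p \<in># \<beta>2" by auto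
    then have "fst p \<in> verts \<beta>1" "fst p \<in> verts \<beta>2" by (auto simp: verts_def)
    then show False using less.prems(4) by auto
  qed
  have c1: "count \<beta>2 p = 0" if "p \<in># \<beta>1" for p using that disj by (auto simp: not_in_iff)
  have c2: "count \<beta>1 p = 0" if "p \<notin># \<beta>1" for p using that by (auto simp: not_in_iff)
  have sub: "{\<gamma>. \<gamma> \<subseteq># \<beta>1} \<subseteq> {\<gamma>. \<gamma> \<subset># \<beta>}"
  proof
    fix \<gamma> assume "\<gamma> \<in> {\<gamma>. \<gamma> \<subseteq># \<beta>1}"
    then have "\<gamma> \<subseteq># \<beta>1" by simp
    moreover have "\<beta>1 \<subset># \<beta>" unfolding \<beta>_def using less.prems(3)
      by (simp add: subset_mset.less_le_not_le)
    ultimately show "\<gamma> \<in> {\<gamma>. \<gamma> \<subset># \<beta>}" by auto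
  qed
  have zero: "T \<gamma> = 0" if "\<gamma> \<in> {\<gamma>. \<gamma> \<subset># \<beta>} - {\<gamma>. \<gamma> \<subseteq># \<beta>1}" for \<gamma>
  proof -
    have g: "\<gamma> \<subset># \<beta>" "\<not> \<gamma> \<subseteq># \<beta>1" using that by auto
    define \<gamma>1 where "\<gamma>1 = filter_mset (\<lambda>p. p \<in># \<beta>1) \<gamma>"
    define \<gamma>2 where "\<gamma>2 = filter_mset (\<lambda>p. p \<notin># \<beta>1) \<gamma>"
    have gs: "\<gamma> = \<gamma>1 + \<gamma>2" unfolding \<gamma>1_def \<gamma>2_def by (simp add: multiset_partition)
    have cg: "count \<gamma> p \<le> count \<beta>1 p + count \<beta>2 p" for p
      using g(1) unfolding \<beta>_def by (metis count_union mset_subset_eq_count subset_mset.less_imp_le)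
    have g1: "\<gamma>1 \<subseteq># \<beta>1"
      unfolding subseteq_mset_def \<gamma>1_def using cg c1 by (metis add_0_right count_filter_mset le0)
    have g2: "\<gamma>2 \<subseteq># \<beta>2"
      unfolding subseteq_mset_def \<gamma>2_def using cg c2 by (metis add_0 count_filter_mset le0)
    have ne: "\<gamma>2 \<noteq> {#}" using g(2) g1 gs by auto
    have vd: "verts \<gamma>2 \<inter> (verts \<gamma>1 \<union> {1}) = {}"
      using verts_mono[OF g1] verts_mono[OF g2] less.prems(4) by auto
    have sz: "size (\<gamma>1 + \<gamma>2) < size (\<beta>1 + \<beta>2)"
      using mset_subset_size[OF g(1)] gs unfolding \<beta>_def by simp
    have "kappa n lam \<rho> (\<gamma>1 + \<gamma>2) = 0"
      by (rule less.hyps[OF sz sub_idx[OF g1 less.prems(1)] sub_idx[OF g2 less.prems(2)] ne vd])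
    then show ?thesis unfolding T_def gs by simp
  qed
  have "(\<Sum>\<gamma>\<in>{\<gamma>. \<gamma> \<subset># \<beta>}. T \<gamma>) = (\<Sum>\<gamma>\<in>{\<gamma>. \<gamma> \<subseteq># \<beta>1}. T \<gamma>)"
    by (rule sum.mono_neutral_right[OF finite_psubmsets sub]) (use zero in blast)
  also have "\<dots> = (\<Sum>\<gamma>\<in>{\<gamma>. \<gamma> \<subseteq># \<beta>1}. GG n lam \<rho> \<beta>2 *
                  (kappa n lam \<rho> \<gamma> * real (mbinom \<beta>1 \<gamma>) * GG n lam \<rho> (\<beta>1 - \<gamma>)))"
  proof (rule sum.cong[OF refl])
    fix \<gamma> assume "\<gamma> \<in> {\<gamma>. \<gamma> \<subseteq># \<beta>1}"
    then have g: "\<gamma> \<subseteq># \<beta>1" by simp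
    have m: "mbinom \<beta> \<gamma> = mbinom \<beta>1 \<gamma>" unfolding \<beta>_def by (rule mbinom_split[OF disj g])
    have d: "\<beta> - \<gamma> = (\<beta>1 - \<gamma>) + \<beta>2" unfolding \<beta>_def using g
      by (metis subset_mset.add_diff_assoc2)
    have "GG n lam \<rho> (\<beta> - \<gamma>) = GG n lam \<rho> (\<beta>1 - \<gamma>) * GG n lam \<rho> \<beta>2"
      unfolding d
      by (rule GG_mult[OF sub_idx_diff[OF less.prems(1)] less.prems(2)])
         (use verts_mono[of "\<beta>1 - \<gamma>" \<beta>1] less.prems(4) in auto)
    then show "T \<gamma> = GG n lam \<rho> \<beta>2 * (kappa n lam \<rho> \<gamma> * real (mbinom \<beta>1 \<gamma>) * GG n lam \<rho> (\<beta>1 - \<gamma>))"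
      unfolding T_def m by simp
  qed
  also have "\<dots> = GG n lam \<rho> \<beta>2 * FF n lam \<rho> \<beta>1"
    by (simp add: sum_distrib_left[symmetric] conv[OF less.prems(1)])
  also have "\<dots> = FF n lam \<rho> \<beta>"
    unfolding \<beta>_def by (simp add: FF_mult[OF assms(1) less.prems(1,2,4)])
  finally show ?case
    by (subst kappa_eq) (simp add: T_def \<beta>_def)
qed


lemma kappa_zero:
  assumes "1 \<le> n" "set_mset \<beta> \<subseteq> idx_pairs n" "\<beta> \<noteq> {#}" "\<not> (mg_connected \<beta> \<and> 1 \<in> verts \<beta>)"
  shows "kappa n lam \<rho> \<beta> = 0"
proof -
  obtain \<beta>1 \<beta>2 where b: "\<beta> = \<beta>1 + \<beta>2" "\<beta>2 \<noteq> {#}" "verts \<beta>2 \<inter> (verts \<beta>1 \<union> {1}) = {}"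
    using split_exists[OF assms(3,4)] by blast
  have "set_mset \<beta>1 \<subseteq> idx_pairs n" "set_mset \<beta>2 \<subseteq> idx_pairs n" using assms(2) b(1) by auto
  then show ?thesis using vanish[OF assms(1) _ _ b(2,3)] b(1) by simp
qed

lemma main:
  assumes n: "1 \<le> n" and lam: "lam \<ge> 0" and r0: "0 < \<rho>" and r1: "\<rho> < 1"
    and rM: "\<rho> * 2 ^ (M + 1) \<le> 1"
  shows "set_mset \<alpha> \<subseteq> idx_pairs n \<Longrightarrow> \<alpha> \<noteq> {#} \<Longrightarrow> mg_connected \<alpha> \<Longrightarrow> 1 \<in> verts \<alpha>
    \<Longrightarrow> size \<alpha> \<le> M \<Longrightarrow>
    1 / 2 * (lam ^ size \<alpha> * \<rho> ^ card (verts \<alpha>)) \<le> kappa n lam \<rho> \<alpha>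
    \<and> kappa n lam \<rho> \<alpha> \<le> lam ^ size \<alpha> * \<rho> ^ card (verts \<alpha>)"
proof (induction "size \<alpha>" arbitrary: \<alpha> rule: less_induct)
  case less
  define m where "m = size \<alpha>"
  define L where "L = lam ^ m * \<rho> ^ card (verts \<alpha>)"
  have L0: "L \<ge> 0" unfolding L_def using lam r0 by simp
  define T where "T \<beta> = kappa n lam \<rho> \<beta> * real (mbinom \<alpha> \<beta>) * GG n lam \<rho> (\<alpha> - \<beta>)" for \<beta>
  define R where "R = {\<beta>. \<beta> \<subset># \<alpha>} - {{#}}"
  have finR: "finite R" unfolding R_def using finite_psubmsets by auto
  have FFa: "FF n lam \<rho> \<alpha> = L"
    unfolding L_def m_def using FF_eq[OF n less.prems(1)] less.prems(4)
    by (simp add: insert_absorb)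
  have e1: "{\<beta>. \<beta> \<subset># \<alpha>} = insert {#} R"
    unfolding R_def using less.prems(2) by (auto simp: subset_mset.zero_less_iff_neq_zero)
  have T0: "T {#} = \<rho> * L"
    unfolding T_def using kappa_empty[OF n] mbinom_empty GG_eq[OF less.prems(1)]
    by (simp add: L_def m_def)
  have Tb: "0 \<le> T \<beta> \<and> T \<beta> \<le> real (mbinom \<alpha> \<beta>) * (\<rho> * L)" if "\<beta> \<in> R" for \<beta>
  proof -
    have b: "\<beta> \<subset># \<alpha>" "\<beta> \<noteq> {#}" using that unfolding R_def by auto
    have bs: "\<beta> \<subseteq># \<alpha>" using b(1) by simp
    have idxb: "set_mset \<beta> \<subseteq> idx_pairs n" using sub_idx[OF bs less.prems(1)] .
    have idxd: "set_mset (\<alpha> - \<beta>) \<subseteq> idx_pairs n" using sub_idx_diff[OF less.prems(1)] .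
    show ?thesis
    proof (cases "mg_connected \<beta> \<and> 1 \<in> verts \<beta>")
      case False
      then have "kappa n lam \<rho> \<beta> = 0" using kappa_zero[OF n idxb b(2)] by blast
      then show ?thesis unfolding T_def using L0 r0 by simp
    next
      case True
      have szb: "size \<beta> < size \<alpha>" using mset_subset_size[OF b(1)] .
      have IH: "1 / 2 * (lam ^ size \<beta> * \<rho> ^ card (verts \<beta>)) \<le> kappa n lam \<rho> \<beta>
         \<and> kappa n lam \<rho> \<beta> \<le> lam ^ size \<beta> * \<rho> ^ card (verts \<beta>)"
        using less.hyps[OF szb idxb b(2)] True szb less.prems(5) by auto
      have k0: "0 \<le> kappa n lam \<rho> \<beta>"
      proof -
        have "0 \<le> lam ^ size \<beta> * \<rho> ^ card (verts \<beta>)" using lam r0 by simp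
        then show ?thesis using IH by linarith
      qed
      have dne: "\<alpha> - \<beta> \<noteq> {#}" using b(1)
        by (simp add: Diff_eq_empty_iff_mset subset_mset.less_le_not_le)
      have a: "\<alpha> = \<beta> + (\<alpha> - \<beta>)" using bs by simp
      have int: "verts \<beta> \<inter> verts (\<alpha> - \<beta>) \<noteq> {}"
        by (rule conn_intersect[OF less.prems(3) bs b(2) dne])
      have "card (verts \<beta>) + card (verts (\<alpha> - \<beta>)) = card (verts \<alpha>) + card (verts \<beta> \<inter> verts (\<alpha> - \<beta>))"
        using card_Un_Int[OF finite_verts finite_verts, of \<beta> "\<alpha> - \<beta>"] verts_plus[of \<beta> "\<alpha> - \<beta>"] a
        by simp
      moreover have "card (verts \<beta> \<inter> verts (\<alpha> - \<beta>)) \<ge> 1"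
        using int by (simp add: Suc_leI card_gt_0_iff finite_verts)
      ultimately have cv: "card (verts \<beta>) + card (verts (\<alpha> - \<beta>)) \<ge> card (verts \<alpha>) + 1" by linarith
      have sz: "size \<beta> + size (\<alpha> - \<beta>) = m" unfolding m_def using a by (metis size_union)
      have G: "GG n lam \<rho> (\<alpha> - \<beta>) = lam ^ size (\<alpha> - \<beta>) * \<rho> ^ card (verts (\<alpha> - \<beta>))"
        using GG_eq[OF idxd] .
      have G0: "GG n lam \<rho> (\<alpha> - \<beta>) \<ge> 0" unfolding G using lam r0 by simp
      have "T \<beta> \<le> (lam ^ size \<beta> * \<rho> ^ card (verts \<beta>)) * real (mbinom \<alpha> \<beta>) * GG n lam \<rho> (\<alpha> - \<beta>)"
        unfolding T_def using IH G0 by (intro mult_right_mono) auto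
      also have "\<dots> = real (mbinom \<alpha> \<beta>) * (lam ^ m * \<rho> ^ (card (verts \<beta>) + card (verts (\<alpha> - \<beta>))))"
        unfolding G sz[symmetric] by (simp add: power_add algebra_simps)
      also have "\<dots> \<le> real (mbinom \<alpha> \<beta>) * (lam ^ m * \<rho> ^ (card (verts \<alpha>) + 1))"
        using power_decreasing[OF cv, of \<rho>] r0 r1 lam
        by (intro mult_left_mono) auto
      also have "\<dots> = real (mbinom \<alpha> \<beta>) * (\<rho> * L)" unfolding L_def by (simp add: algebra_simps)
      finally show ?thesis unfolding T_def using k0 G0 by simp
    qed
  qed
  have S0: "0 \<le> (\<Sum>\<beta>\<in>R. T \<beta>)" using Tb by (intro sum_nonneg) auto
  have "(\<Sum>\<beta>\<in>R. T \<beta>) \<le> (\<Sum>\<beta>\<in>R. real (mbinom \<alpha> \<beta>) * (\<rho> * L))"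
    using Tb by (intro sum_mono) auto
  also have "\<dots> = (\<Sum>\<beta>\<in>R. real (mbinom \<alpha> \<beta>)) * (\<rho> * L)" by (simp add: sum_distrib_right)
  also have "(\<Sum>\<beta>\<in>R. real (mbinom \<alpha> \<beta>)) = 2 ^ m - 2"
  proof -
    have e2: "{\<beta>. \<beta> \<subseteq># \<alpha>} = insert \<alpha> (insert {#} R)"
    proof -
      have "{\<beta>. \<beta> \<subseteq># \<alpha>} = insert \<alpha> {\<beta>. \<beta> \<subset># \<alpha>}" by auto
      then show ?thesis unfolding e1 .
    qed
    have "\<alpha> \<notin> insert {#} R" using less.prems(2) unfolding R_def by auto
    moreover have "{#} \<notin> R" unfolding R_def by auto
    ultimately have "(\<Sum>\<beta>\<in>{\<beta>. \<beta> \<subseteq># \<alpha>}. real (mbinom \<alpha> \<beta>)) = 2 + (\<Sum>\<beta>\<in>R. real (mbinom \<alpha> \<beta>))"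
      unfolding e2 using finR by (simp add: mbinom_self mbinom_empty)
    then show ?thesis using mbinom_sum[of \<alpha>] unfolding m_def by simp
  qed
  finally have S1: "(\<Sum>\<beta>\<in>R. T \<beta>) \<le> (2 ^ m - 2) * (\<rho> * L)" .
  have k: "kappa n lam \<rho> \<alpha> = L - \<rho> * L - (\<Sum>\<beta>\<in>R. T \<beta>)"
  proof -
    have "kappa n lam \<rho> \<alpha> = FF n lam \<rho> \<alpha> - (\<Sum>\<beta>\<in>{\<beta>. \<beta> \<subset># \<alpha>}. T \<beta>)"
      unfolding T_def by (rule kappa_eq)
    also have "(\<Sum>\<beta>\<in>{\<beta>. \<beta> \<subset># \<alpha>}. T \<beta>) = T {#} + (\<Sum>\<beta>\<in>R. T \<beta>)"
      unfolding e1 using finR by (subst sum.insert) (auto simp: R_def)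
    finally show ?thesis using FFa T0 by simp
  qed
  have pm: "\<rho> * 2 ^ m \<le> 1 / 2"
  proof -
    have "(2::real) ^ m \<le> 2 ^ M" using less.prems(5) unfolding m_def by (intro power_increasing) auto
    then have "\<rho> * 2 ^ m \<le> \<rho> * 2 ^ M" using r0 by simp
    then show ?thesis using rM by simp
  qed
  have "0 \<le> \<rho> * L" using r0 L0 by simp
  then have up: "kappa n lam \<rho> \<alpha> \<le> L" using k S0 by linarith
  have "kappa n lam \<rho> \<alpha> \<ge> L - \<rho> * L - (2 ^ m - 2) * (\<rho> * L)" using k S1 by simp
  moreover have "L - \<rho> * L - (2 ^ m - 2) * (\<rho> * L) = L * (1 - \<rho> * 2 ^ m + \<rho>)"
    by (simp add: algebra_simps)
  moreover have "L * (1 - \<rho> * 2 ^ m + \<rho>) \<ge> L * (1/2)"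
    using pm r0 L0 by (intro mult_left_mono) auto
  ultimately have lo: "1 / 2 * L \<le> kappa n lam \<rho> \<alpha>" by simp
  show ?case using up lo unfolding L_def m_def by simp
qed


theorem mainTheorem19:
  fixes n :: nat and lam \<rho> :: real and \<alpha> :: "(nat \<times> nat) multiset"
  assumes "n \<ge> 1" and "lam \<ge> 0" and "0 < \<rho>" and "\<rho> < 1"
    and "set_mset \<alpha> \<subseteq> idx_pairs n"
    and "mg_connected \<alpha>" and "1 \<in> verts \<alpha>"
    and "1 \<le> size \<alpha>" and "real (size \<alpha>) \<le> log 2 (1 / \<rho>) - 1"
  shows "1 / 2 * lam ^ size \<alpha> * \<rho> ^ card (verts \<alpha>) \<le> kappa n lam \<rho> \<alpha>
    \<and> kappa n lam \<rho> \<alpha> \<le> lam ^ size \<alpha> * \<rho> ^ card (verts \<alpha>)"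
proof -
  have "real (size \<alpha> + 1) \<le> log 2 (1 / \<rho>)" using assms(9) by simp
  then have "2 powr real (size \<alpha> + 1) \<le> 1 / \<rho>"
    using le_log_iff[of 2 "1/\<rho>"] assms(3) by simp
  moreover have "2 powr real (size \<alpha> + 1) = (2::real) ^ (size \<alpha> + 1)"
    by (rule powr_realpow) simp
  ultimately have "(2::real) ^ (size \<alpha> + 1) \<le> 1 / \<rho>" by simp
  then have rM: "\<rho> * 2 ^ (size \<alpha> + 1) \<le> 1" using assms(3) by (simp add: field_simps)
  have ne: "\<alpha> \<noteq> {#}" using assms(8) by auto
  show ?thesis
    using main[OF assms(1-4) rM assms(5) ne assms(6,7) order_refl] by (simp add: mult.assoc)
qed

end
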